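(* Let $d\ge2$, $j\in[d-1]$, $j\le k\le d$, and $R$ an abelian group with at least two elements. If in a simplicial complex $\mathcal G$ on $[n]$ the 4-tuple $(K,C,w,a)$ forms a copy of $\hat M_{j,k}$, then $H^j(\mathcal G;R)\neq0$.
   Context: $H^j(\mathcal G;R)$ is the $j$-th simplicial cohomology group with coefficients in $R$. A $(j+2)$-set is a $j$-shell in $\mathcal G$ if all its $(j+1)$-subsets are $j$-simplices ($i$-simplices being members of size $i+1$). For $j+1\le k\le d$, $(K,C,w,a)$ is a copy of $\hat M_{j,k}$ if $K$ is a $k$-simplex of $\mathcal G$; $C\subset K$ with $|C|=j$ such that every simplex of $\mathcal G$ containing some set $C\cup\{x\}$, $x\in K\setminus C$, is contained in $K$; $w\in K\setminus C$ and $a\in[n]\setminus K$ with $C\cup\{w,a\}$ a $j$-shell. For $k=j$: $(K,C,w,a)$ is a copy of $\hat M_{j,j}$ if $K$ is an isolated $j$-simplex (contained in no other simplex of $\mathcal G$), $a\in[n]\setminus K$ with $K\cup\{a\}$ a $j$-shell, $C$ is the set of first $j$ vertices of $K$ and $w$ the last vertex of $K$ in increasing order on $[n]$. *)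

theory Defs
  imports Main
begin

definition simplicial_complex :: "nat \<Rightarrow> nat set set \<Rightarrow> bool" where
  "simplicial_complex n G \<longleftrightarrow>
     (\<forall>\<sigma>\<in>G. \<sigma> \<subseteq> {1..n}) \<and> (\<forall>\<sigma>\<in>G. \<forall>\<tau>. \<tau> \<subseteq> \<sigma> \<longrightarrow> \<tau> \<in> G)"

definition simplices :: "nat set set \<Rightarrow> nat \<Rightarrow> nat set set" where
  "simplices G i = {\<sigma> \<in> G. card \<sigma> = i + 1}"

(* i-cochains with coefficients in the abelian group 'r: functions on sets of
   vertices vanishing outside the i-simplices (simplices oriented by the
   increasing order of [n]) *)
definition cochains :: "nat set set \<Rightarrow> nat \<Rightarrow> (nat set \<Rightarrow> 'r::ab_group_add) set" where
  "cochains G i = {f. \<forall>\<sigma>. \<sigma> \<notin> simplices G i \<longrightarrow> f \<sigma> = 0}"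

definition coboundary :: "nat set set \<Rightarrow> nat \<Rightarrow> (nat set \<Rightarrow> 'r::ab_group_add) \<Rightarrow> nat set \<Rightarrow> 'r" where
  "coboundary G i f \<tau> =
     (if \<tau> \<in> simplices G (i + 1) then
        (\<Sum>l<i + 2. (if even l then f (\<tau> - {sorted_list_of_set \<tau> ! l})
                             else - f (\<tau> - {sorted_list_of_set \<tau> ! l})))
      else 0)"

definition cocycles :: "nat set set \<Rightarrow> nat \<Rightarrow> (nat set \<Rightarrow> 'r::ab_group_add) set" where
  "cocycles G i = {f \<in> cochains G i. coboundary G i f = (\<lambda>_. 0)}"

fun coboundaries :: "nat set set \<Rightarrow> nat \<Rightarrow> (nat set \<Rightarrow> 'r::ab_group_add) set" where
  "coboundaries G 0 = {\<lambda>_. 0}"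
| "coboundaries G (Suc i) = coboundary G i ` cochains G i"

(* H^j(G;R) = Z^j / B^j is nonzero iff some j-cocycle is not a j-coboundary.
   The coefficient group R is the type 'r. *)
definition cohomology_nonzero :: "nat set set \<Rightarrow> nat \<Rightarrow> 'r::ab_group_add itself \<Rightarrow> bool" where
  "cohomology_nonzero G j R \<longleftrightarrow> (\<exists>f \<in> (cocycles G j :: (nat set \<Rightarrow> 'r) set). f \<notin> coboundaries G j)"

definition shell :: "nat set set \<Rightarrow> nat \<Rightarrow> nat set \<Rightarrow> bool" where
  "shell G j S \<longleftrightarrow> finite S \<and> card S = j + 2 \<and>
     (\<forall>T. T \<subseteq> S \<and> card T = j + 1 \<longrightarrow> T \<in> simplices G j)"

definition copy_M_hat :: "nat \<Rightarrow> nat set set \<Rightarrow> nat \<Rightarrow> nat \<Rightarrow> nat set \<Rightarrow> nat set \<Rightarrow> nat \<Rightarrow> nat \<Rightarrow> bool" where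
  "copy_M_hat n G j k K C w a \<longleftrightarrow>
     (if k = j then
        K \<in> simplices G j \<and>
        (\<forall>\<sigma>\<in>G. K \<subseteq> \<sigma> \<longrightarrow> \<sigma> = K) \<and>
        a \<in> {1..n} - K \<and> shell G j (insert a K) \<and>
        C = set (take j (sorted_list_of_set K)) \<and>
        w = last (sorted_list_of_set K)
      else
        K \<in> simplices G k \<and>
        C \<subseteq> K \<and> card C = j \<and>
        (\<forall>x\<in>K - C. \<forall>\<sigma>\<in>G. insert x C \<subseteq> \<sigma> \<longrightarrow> \<sigma> \<subseteq> K) \<and>
        w \<in> K - C \<and> a \<in> {1..n} - K \<and> shell G j (insert w (insert a C)))"

end

theory Submission
  imports Defs
begin
definition sg :: "nat \<Rightarrow> 'r::ab_group_add \<Rightarrow> 'r" where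
  "sg l x = (if even l then x else - x)"
definition cnt :: "nat set \<Rightarrow> nat \<Rightarrow> nat" where
  "cnt S v = card {u\<in>S. u < v}"
definition D :: "(nat set \<Rightarrow> 'r::ab_group_add) \<Rightarrow> nat set \<Rightarrow> 'r" where
  "D g S = (\<Sum>v\<in>S. sg (cnt S v) (g (S - {v})))"

lemma cnt_nth:
  assumes "finite S" "l < card S"
  shows "cnt S (sorted_list_of_set S ! l) = l"
proof -
  let ?xs = "sorted_list_of_set S"
  have ss: "sorted_wrt (<) ?xs" by simp
  have len: "length ?xs = card S" by simp
  have "{u\<in>S. u < ?xs ! l} = (!) ?xs ` {..<l}"
  proof safe
    fix u assume u: "u \<in> S" "u < ?xs ! l"
    then obtain i where i: "i < length ?xs" "u = ?xs ! i"
      using assms by (metis in_set_conv_nth set_sorted_list_of_set)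
    have "i < l"
    proof (rule ccontr)
      assume "\<not> i < l"
      then have "l \<le> i" by simp
      then have "?xs ! l \<le> ?xs ! i"
        using i ss by (metis sorted_wrt_iff_nth_less order_le_less sorted_wrt_mono_rel)
      then show False using u i by simp
    qed
    then show "u \<in> (!) ?xs ` {..<l}" using i by auto
  next
    fix i assume "i < l"
    then have "i < length ?xs" using assms len by auto
    then have "?xs ! i \<in> set ?xs" by (rule nth_mem)
    then show "?xs ! i \<in> S" using assms by simp
    show "?xs ! i < ?xs ! l" using \<open>i < l\<close> assms len ss
      by (simp add: sorted_wrt_iff_nth_less)
  qed
  moreover have "inj_on ((!) ?xs) {..<l}"
    using assms len by (intro inj_on_nth) auto
  ultimately show ?thesis unfolding cnt_def by (simp add: card_image)
qed

lemma reindex: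
  assumes "finite S"
  shows "(\<Sum>l<card S. (if even l then g (S - {sorted_list_of_set S ! l})
                             else - g (S - {sorted_list_of_set S ! l}))) = D g S"
proof -
  have b: "bij_betw ((!) (sorted_list_of_set S)) {..<card S} S"
    by (rule bij_betw_nth) (use assms in auto)
  have "D g S = (\<Sum>l<card S. sg (cnt S (sorted_list_of_set S ! l)) (g (S - {sorted_list_of_set S ! l})))"
    unfolding D_def by (rule sum.reindex_bij_betw[OF b, symmetric])
  also have "\<dots> = (\<Sum>l<card S. (if even l then g (S - {sorted_list_of_set S ! l})
                             else - g (S - {sorted_list_of_set S ! l})))"
    by (rule sum.cong) (auto simp: cnt_nth assms sg_def)
  finally show ?thesis by simp
qed

lemma sg_add: "sg l (x + y) = sg l x + sg l (y::'r::ab_group_add)"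
  by (simp add: sg_def)
lemma sg_sum: "sg l (sum f A) = (\<Sum>a\<in>A. sg l (f a :: 'r::ab_group_add))"
  by (simp add: sg_def sum_negf)
lemma sg_sg: "sg a (sg b x) = sg (a + b) (x::'r::ab_group_add)"
  by (simp add: sg_def)
lemma sg_Suc: "sg (Suc l) x = - sg l (x::'r::ab_group_add)"
  by (simp add: sg_def)
lemma sg_zero_iff: "(sg l x = 0) = (x = (0::'r::ab_group_add))"
  by (simp add: sg_def)

lemma cnt_remove_greater:
  assumes "finite S" "u < v" shows "cnt (S - {v}) u = cnt S u"
  unfolding cnt_def using assms by (intro arg_cong[where f=card]) auto

lemma cnt_remove_smaller:
  assumes "finite S" "u < v" "u \<in> S" shows "cnt (S - {u}) v + 1 = cnt S v"
proof -
  have "{x \<in> S - {u}. x < v} = {x \<in> S. x < v} - {u}" by auto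
  moreover have "u \<in> {x \<in> S. x < v}" using assms by auto
  moreover have "finite {x \<in> S. x < v}" using assms by auto
  ultimately have "card ({x \<in> S. x < v} - {u}) = card {x \<in> S. x < v} - 1"
    and "card {x \<in> S. x < v} > 0"
    by (auto simp: card_gt_0_iff)
  then show ?thesis unfolding cnt_def using \<open>{x \<in> S - {u}. x < v} = {x \<in> S. x < v} - {u}\<close> by simp
qed

lemma DD:
  assumes "finite S"
  shows "D (D g) S = (0::'r::ab_group_add)"
proof -
  define T where "T v u = sg (cnt S v + cnt (S - {v}) u) (g (S - {v} - {u}))" for v u
  define P where "P = Sigma S (\<lambda>v. S - {v})"
  define P1 where "P1 = {p \<in> P. snd p < fst p}"
  define P2 where "P2 = {p \<in> P. fst p < snd p}"
  have fP: "finite P" unfolding P_def using assms by auto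
  have "D (D g) S = (\<Sum>v\<in>S. \<Sum>u\<in>S - {v}. T v u)"
    unfolding D_def T_def by (simp add: sg_sum sg_sg)
  also have "\<dots> = (\<Sum>p\<in>P. T (fst p) (snd p))"
    unfolding P_def by (subst sum.Sigma) (use assms in \<open>auto simp: split_beta\<close>)
  also have "P = P1 \<union> P2" unfolding P1_def P2_def P_def by auto
  also have "(\<Sum>p\<in>P1 \<union> P2. T (fst p) (snd p)) =
      (\<Sum>p\<in>P1. T (fst p) (snd p)) + (\<Sum>p\<in>P2. T (fst p) (snd p))"
    by (rule sum.union_disjoint) (use fP in \<open>auto simp: P1_def P2_def\<close>)
  also have "(\<Sum>p\<in>P2. T (fst p) (snd p)) = (\<Sum>p\<in>P1. T (snd p) (fst p))"
  proof -
    have "P2 = prod.swap ` P1" unfolding P1_def P2_def P_def by force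
    then show ?thesis by (simp add: sum.reindex)
  qed
  also have "(\<Sum>p\<in>P1. T (fst p) (snd p)) + (\<Sum>p\<in>P1. T (snd p) (fst p))
      = (\<Sum>p\<in>P1. T (fst p) (snd p) + T (snd p) (fst p))"
    by (simp add: sum.distrib)
  also have "\<dots> = 0"
  proof (rule sum.neutral, clarify)
    fix v u assume "(v, u) \<in> P1"
    then have vu: "v \<in> S" "u \<in> S" "u < v" unfolding P1_def P_def by auto
    have e: "S - {v} - {u} = S - {u} - {v}" by auto
    have c1: "cnt (S - {v}) u = cnt S u" using vu assms by (simp add: cnt_remove_greater)
    have c2: "cnt (S - {u}) v + 1 = cnt S v" using vu assms cnt_remove_smaller[of S u v] by simp
    have "T v u = sg (cnt (S - {u}) v + cnt S u + 1) (g (S - {v} - {u}))"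
      unfolding T_def using c1 c2[symmetric] by (simp add: algebra_simps)
    also have "\<dots> = - T u v" unfolding T_def e by (simp add: sg_Suc algebra_simps)
    finally show "T (fst (v, u)) (snd (v, u)) + T (snd (v, u)) (fst (v, u)) = 0" by simp
  qed
  finally show ?thesis by simp
qed

lemma simp_finite:
  assumes "\<tau> \<in> simplices G i" shows "finite \<tau>"
proof (rule ccontr)
  assume "\<not> finite \<tau>"
  then have "card \<tau> = 0" by simp
  with assms show False unfolding simplices_def by simp
qed

lemma cob_eq:
  assumes "\<tau> \<in> simplices G (i + 1)"
  shows "coboundary G i f \<tau> = D f \<tau>"
proof -
  have "finite \<tau>" by (rule simp_finite[OF assms])
  moreover have "card \<tau> = i + 2" using assms unfolding simplices_def by simp
  ultimately have "(\<Sum>l<i + 2. (if even l then f (\<tau> - {sorted_list_of_set \<tau> ! l})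
                             else - f (\<tau> - {sorted_list_of_set \<tau> ! l}))) = D f \<tau>"
    using reindex[of \<tau> f] by simp
  then show ?thesis unfolding coboundary_def using assms by simp
qed

lemma single_term:
  assumes "finite S" "a \<in> S" "\<And>v. v \<in> S \<Longrightarrow> v \<noteq> a \<Longrightarrow> h v = (0::'r::ab_group_add)"
  shows "sum h S = h a"
proof -
  have "sum h S = h a + sum h (S - {a})" using assms by (simp add: sum.remove)
  also have "sum h (S - {a}) = 0" using assms by (intro sum.neutral) auto
  finally show ?thesis by simp
qed

lemma not_cob:
  assumes "shell G (Suc i) S" "D \<phi> S \<noteq> (0::'r::ab_group_add)"
  shows "\<phi> \<notin> coboundaries G (Suc i)"
proof
  assume "\<phi> \<in> coboundaries G (Suc i)"
  then obtain g where g: "\<phi> = coboundary G i g" by auto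
  have fS: "finite S" "card S = i + 3" using assms(1) unfolding shell_def by auto
  have "D \<phi> S = D (D g) S" unfolding D_def[of \<phi> S] D_def[of "D g" S]
  proof (rule sum.cong[OF refl])
    fix v assume v: "v \<in> S"
    have "S - {v} \<in> simplices G (Suc i)"
      using assms(1) v fS unfolding shell_def by auto
    then have "\<phi> (S - {v}) = D g (S - {v})" unfolding g using cob_eq[of "S - {v}" G i g] by simp
    then show "sg (cnt S v) (\<phi> (S - {v})) = sg (cnt S v) (D g (S - {v}))" by simp
  qed
  also have "\<dots> = 0" by (rule DD) (use fS in simp)
  finally show False using assms(2) by simp
qed

theorem corollary4p9:
  fixes n d j k :: nat and G :: "nat set set" and K C :: "nat set" and w a :: nat
  assumes "d \<ge> 2" and "1 \<le> j" and "j \<le> d - 1" and "j \<le> k" and "k \<le> d"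
    and "\<exists>x y :: 'r::ab_group_add. x \<noteq> y"
    and "simplicial_complex n G"
    and "copy_M_hat n G j k K C w a"
  shows "cohomology_nonzero G j TYPE('r)"
proof -
  obtain x y :: 'r where "x \<noteq> y" using assms(6) by blast
  define r where "r = x - y"
  have r: "r \<noteq> 0" using \<open>x \<noteq> y\<close> unfolding r_def by simp
  obtain i where ji: "j = Suc i" using assms(2) by (cases j) auto
  have closed: "\<And>\<sigma> \<tau>. \<sigma> \<in> G \<Longrightarrow> \<tau> \<subseteq> \<sigma> \<Longrightarrow> \<tau> \<in> G"
    using assms(7) unfolding simplicial_complex_def by blast
  show ?thesis
  proof (cases "k = j")
    case True
    note cm = assms(8)[unfolded copy_M_hat_def if_P[OF True]]
    have K: "K \<in> simplices G j" and iso: "\<forall>\<sigma>\<in>G. K \<subseteq> \<sigma> \<longrightarrow> \<sigma> = K"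
      and aK: "a \<notin> K" and sh: "shell G j (insert a K)"
      using cm by blast+
    have fK: "finite K" "card K = j + 1" using simp_finite[OF K] K unfolding simplices_def by simp_all
    define f :: "nat set \<Rightarrow> 'r" where "f \<sigma> = (if \<sigma> = K then r else 0)" for \<sigma>
    have "f \<in> cocycles G j"
      unfolding cocycles_def cochains_def
    proof (safe)
      fix \<sigma> assume "\<sigma> \<notin> simplices G j" then show "f \<sigma> = 0" using K unfolding f_def by auto
    next
      show "coboundary G j f = (\<lambda>_. 0)"
      proof
        fix \<tau>
        show "coboundary G j f \<tau> = 0"
        proof (cases "\<tau> \<in> simplices G (j + 1)")
          case False then show ?thesis unfolding coboundary_def by simp
        next
          case True
          have "D f \<tau> = 0" unfolding D_def
          proof (intro sum.neutral ballI)
            fix v assume "v \<in> \<tau>"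
            have "\<tau> - {v} \<noteq> K"
            proof
              assume e: "\<tau> - {v} = K"
              then have "K \<subseteq> \<tau>" by auto
              then have "\<tau> = K" using iso True unfolding simplices_def by auto
              then show False using True fK unfolding simplices_def by auto
            qed
            then show "sg (cnt \<tau> v) (f (\<tau> - {v})) = 0" unfolding f_def sg_def by simp
          qed
          then show ?thesis by (subst cob_eq[OF True]) simp
        qed
      qed
    qed
    moreover have "f \<notin> coboundaries G j"
    proof -
      let ?S = "insert a K"
      have "D f ?S = sg (cnt ?S a) (f (?S - {a}))" unfolding D_def
      proof (rule single_term)
        fix v assume "v \<in> ?S" "v \<noteq> a"
        then have "?S - {v} \<noteq> K" using aK by auto
        then show "sg (cnt ?S v) (f (?S - {v})) = 0" unfolding f_def sg_def by simp
      qed (use fK in auto)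
      also have "?S - {a} = K" using aK by auto
      finally have "D f ?S \<noteq> 0" using r unfolding f_def by (simp add: sg_zero_iff)
      then show ?thesis using not_cob[of G i ?S f] sh ji by simp
    qed
    ultimately show ?thesis unfolding cohomology_nonzero_def by blast
  next
    case False
    note cm = assms(8)[unfolded copy_M_hat_def if_not_P[OF False]]
    have K: "K \<in> simplices G k" and CK: "C \<subseteq> K" and cC: "card C = j"
      and link: "\<forall>x\<in>K - C. \<forall>\<sigma>\<in>G. insert x C \<subseteq> \<sigma> \<longrightarrow> \<sigma> \<subseteq> K"
      and wK: "w \<in> K - C" and aK: "a \<notin> K" and sh: "shell G j (insert w (insert a C))"
      using cm by blast+
    have fK: "finite K" using simp_finite[OF K] .
    have KG: "K \<in> G" using K unfolding simplices_def by auto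
    define \<psi> :: "nat set \<Rightarrow> 'r" where "\<psi> \<rho> = (if \<rho> = C then r else 0)" for \<rho>
    define \<phi> :: "nat set \<Rightarrow> 'r" where
      "\<phi> \<sigma> = (if \<sigma> \<subseteq> K \<and> card \<sigma> = j + 1 then D \<psi> \<sigma> else 0)" for \<sigma>
    have Dpsi: "\<exists>u\<in>\<rho>. \<rho> - {u} = C" if "D \<psi> \<rho> \<noteq> 0" for \<rho>
    proof (rule ccontr)
      assume "\<not> ?thesis"
      then have "D \<psi> \<rho> = 0" unfolding D_def \<psi>_def sg_def by (intro sum.neutral) auto
      then show False using that by simp
    qed
    have "\<phi> \<in> cocycles G j"
      unfolding cocycles_def cochains_def
    proof (safe)
      fix \<sigma> assume "\<sigma> \<notin> simplices G j" then show "\<phi> \<sigma> = 0"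
        using closed[OF KG] unfolding \<phi>_def simplices_def by auto
    next
      show "coboundary G j \<phi> = (\<lambda>_. 0)"
      proof
        fix \<tau>
        show "coboundary G j \<phi> \<tau> = 0"
        proof (cases "\<tau> \<in> simplices G (j + 1)")
          case False then show ?thesis unfolding coboundary_def by simp
        next
          case True
          have ft: "finite \<tau>" "card \<tau> = j + 2" using simp_finite[OF True] True unfolding simplices_def by simp_all
          have "D \<phi> \<tau> = 0"
          proof (cases "\<tau> \<subseteq> K")
            case True
            have "D \<phi> \<tau> = D (D \<psi>) \<tau>" unfolding D_def[of \<phi> \<tau>] D_def[of "D \<psi>" \<tau>]
            proof (rule sum.cong[OF refl])
              fix v assume "v \<in> \<tau>"
              then have "\<tau> - {v} \<subseteq> K" "card (\<tau> - {v}) = j + 1" using True ft by auto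
              then show "sg (cnt \<tau> v) (\<phi> (\<tau> - {v})) = sg (cnt \<tau> v) (D \<psi> (\<tau> - {v}))"
                unfolding \<phi>_def by simp
            qed
            also have "\<dots> = 0" by (rule DD) (use ft in simp)
            finally show ?thesis .
          next
            case nK: False
            show ?thesis unfolding D_def
            proof (intro sum.neutral ballI)
              fix v assume v: "v \<in> \<tau>"
              have "\<phi> (\<tau> - {v}) = 0"
              proof (rule ccontr)
                assume nz: "\<phi> (\<tau> - {v}) \<noteq> 0"
                then have sub: "\<tau> - {v} \<subseteq> K" and "D \<psi> (\<tau> - {v}) \<noteq> 0"
                  unfolding \<phi>_def by (auto split: if_splits)
                then obtain u where u: "u \<in> \<tau> - {v}" "\<tau> - {v} - {u} = C" using Dpsi by blast
                then have "u \<in> K - C" using sub by auto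
                moreover have "insert u C \<subseteq> \<tau>" using u by auto
                moreover have "\<tau> \<in> G" using \<open>\<tau> \<in> simplices G (j+1)\<close> unfolding simplices_def by auto
                ultimately have "\<tau> \<subseteq> K" using link by blast
                then show False using nK by simp
              qed
              then show "sg (cnt \<tau> v) (\<phi> (\<tau> - {v})) = 0" unfolding sg_def by simp
            qed
          qed
          then show ?thesis by (subst cob_eq[OF True]) simp
        qed
      qed
    qed
    moreover have "\<phi> \<notin> coboundaries G j"
    proof -
      let ?S = "insert w (insert a C)"
      have fS: "finite ?S" "card ?S = j + 2" using sh unfolding shell_def by auto
      have fC: "finite C" using fS by auto
      have aC: "a \<notin> C" "a \<noteq> w" using aK CK wK by auto
      have "D \<phi> ?S = sg (cnt ?S a) (\<phi> (?S - {a}))" unfolding D_def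
      proof (rule single_term)
        fix v assume "v \<in> ?S" "v \<noteq> a"
        then have "\<not> (?S - {v} \<subseteq> K)" using aK by auto
        then show "sg (cnt ?S v) (\<phi> (?S - {v})) = 0" unfolding \<phi>_def sg_def by simp
      qed (use fS in auto)
      also have "?S - {a} = insert w C" using aC by auto
      also have "\<phi> (insert w C) = D \<psi> (insert w C)"
        using wK CK cC fC unfolding \<phi>_def by auto
      also have "D \<psi> (insert w C) = sg (cnt (insert w C) w) (\<psi> (insert w C - {w}))"
        unfolding D_def
      proof (rule single_term)
        fix u assume "u \<in> insert w C" "u \<noteq> w"
        then have "insert w C - {u} \<noteq> C" using wK by auto
        then show "sg (cnt (insert w C) u) (\<psi> (insert w C - {u})) = 0" unfolding \<psi>_def sg_def by simp
      qed (use fC in auto)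
      also have "insert w C - {w} = C" using wK by auto
      finally have "D \<phi> ?S \<noteq> 0" using r unfolding \<psi>_def by (simp add: sg_zero_iff)
      then show ?thesis using not_cob[of G i ?S \<phi>] sh ji by simp
    qed
    ultimately show ?thesis unfolding cohomology_nonzero_def by blast
  qed
qed

end
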